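(* Let $\boldsymbol\alpha,\boldsymbol\beta$ be multisets of $d$ rational numbers and $q$ a prime power with $(q-1)\alpha_i,(q-1)\beta_j\in\mathbb{Z}$. For every integer $m$, the quotients $$\frac{\prod_{i=1}^dg(m+\alpha_i\bar q)g(-m-\beta_i\bar q)}{g(|\boldsymbol\alpha-\boldsymbol\beta|\bar q)}\quad\text{and}\quad\frac{\prod_{i=1}^dg(m+\alpha_i\bar q)g(-m-\beta_i\bar q)}{\prod_{i=1}^dg((\alpha_i-\beta_i)\bar q)}$$ are algebraic integers lying in $\mathbb{Q}(\zeta_{q-1})$, where $|\boldsymbol\alpha-\boldsymbol\beta|=\sum_i(\alpha_i-\beta_i)$ and $\zeta_{q-1}$ is a primitive $(q-1)$-th root of unity.
   Context: Fix a nontrivial additive character $\psi_q$ of $\mathbb{F}_q$, a generator $\omega$ of the character group of $\mathbb{F}_q^\times$, $g(m)=\sum_{x\in\mathbb{F}_q^\times}\omega(x)^m\psi_q(x)$ for $m\in\mathbb{Z}$, and $\bar q=q-1$. *)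

theory Defs
  imports Complex_Main "HOL-Computational_Algebra.Polynomial"
begin

definition additive_char :: "('a::{finite,field} \<Rightarrow> complex) \<Rightarrow> bool" where
  "additive_char \<psi> \<longleftrightarrow> (\<forall>x. \<psi> x \<noteq> 0) \<and> (\<forall>x y. \<psi> (x + y) = \<psi> x * \<psi> y)"

definition mult_char :: "('a::{finite,field} \<Rightarrow> complex) \<Rightarrow> bool" where
  "mult_char \<chi> \<longleftrightarrow> (\<forall>x. x \<noteq> 0 \<longrightarrow> \<chi> x \<noteq> 0) \<and>
     (\<forall>x y. x \<noteq> 0 \<longrightarrow> y \<noteq> 0 \<longrightarrow> \<chi> (x * y) = \<chi> x * \<chi> y)"

definition char_generator :: "('a::{finite,field} \<Rightarrow> complex) \<Rightarrow> bool" where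
  "char_generator \<omega> \<longleftrightarrow> mult_char \<omega> \<and>
     (\<forall>\<chi>. mult_char \<chi> \<longrightarrow> (\<exists>k::nat. \<forall>x. x \<noteq> 0 \<longrightarrow> \<chi> x = \<omega> x ^ k))"

definition gauss_sum :: "('a::{finite,field} \<Rightarrow> complex) \<Rightarrow> ('a \<Rightarrow> complex) \<Rightarrow> int \<Rightarrow> complex" where
  "gauss_sum \<psi> \<omega> m = (\<Sum>x\<in>UNIV - {0}. (\<omega> x) powi m * \<psi> x)"

definition cyclotomic_field :: "nat \<Rightarrow> complex set" where
  "cyclotomic_field n = {poly (map_poly of_rat p) (cis (2 * pi / real n)) | p :: rat poly. True}"

end

theory Submission imports Defs "Jordan_Normal_Form.Char_Poly" begin


lemma of_int_if01[simp]: "(of_int (if P then 1 else 0) :: 'b::ring_1) = (if P then 1 else 0)" by simp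

lemma if01_mult[simp]: "(if P then 1 else 0) * (x::'b::ring_1) = (if P then x else 0)"
  and mult_if01_mult[simp]: "a * (if P then 1 else 0) * (x::'b::ring_1) = (if P then a * x else 0)" by simp_all

definition zv :: "nat \<Rightarrow> complex \<Rightarrow> complex vec" where
  "zv n z = vec n (\<lambda>i. z ^ i)"

definition Tset :: "nat \<Rightarrow> complex \<Rightarrow> complex set" where
  "Tset n z = {x. \<exists>M::int mat. M \<in> carrier_mat n n \<and> map_mat of_int M *\<^sub>v zv n z = x \<cdot>\<^sub>v zv n z}"

lemma Tset_algebraic_int:
  assumes "n > 0" "x \<in> Tset n z" shows "algebraic_int x"
proof -
  obtain M :: "int mat" where M: "M \<in> carrier_mat n n" "map_mat of_int M *\<^sub>v zv n z = x \<cdot>\<^sub>v zv n z"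
    using assms(2) unfolding Tset_def by auto
  let ?A = "map_mat (of_int :: int \<Rightarrow> complex) M"
  have A: "?A \<in> carrier_mat n n" using M by auto
  have ne: "zv n z \<noteq> 0\<^sub>v n"
  proof
    assume "zv n z = 0\<^sub>v n"
    hence "zv n z $ 0 = 0\<^sub>v n $ 0" by simp
    thus False using assms(1) by (simp add: zv_def)
  qed
  have "eigenvector ?A (zv n z) x" unfolding eigenvector_def using M A ne by (auto simp: zv_def)
  hence "eigenvalue ?A x" unfolding eigenvalue_def by blast
  hence "poly (char_poly ?A) x = 0" using eigenvalue_root_char_poly[OF A] by simp
  also have "char_poly ?A = map_poly of_int (char_poly M)"
    by (rule of_int_hom.char_poly_hom[OF M(1)])
  finally have p0: "poly (map_poly of_int (char_poly M)) x = 0" .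
  have dm: "degree (char_poly M) = n \<and> coeff (char_poly M) n = 1" by (rule degree_monic_char_poly[OF M(1)])
  show ?thesis
  proof (rule algebraic_int.intros[of "map_poly of_int (char_poly M)"])
    show "lead_coeff (map_poly of_int (char_poly M)) = (1::complex)"
      using dm by (simp add: degree_map_poly coeff_map_poly)
    show "\<forall>i. coeff (map_poly of_int (char_poly M)) i \<in> \<int>"
      by (simp add: coeff_map_poly)
  qed (rule p0)
qed

lemma Tset_of_int: "of_int c \<in> Tset n z"
proof -
  have "map_mat of_int (c \<cdot>\<^sub>m 1\<^sub>m n) *\<^sub>v zv n z = of_int c \<cdot>\<^sub>v zv n z"
  proof (rule eq_vecI)
    fix i assume "i < dim_vec (of_int c \<cdot>\<^sub>v zv n z)"
    hence i: "i < n" by (simp add: zv_def)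
    have "(map_mat of_int (c \<cdot>\<^sub>m 1\<^sub>m n) *\<^sub>v zv n z) $ i = (\<Sum>k=0..<n. (if k = i then of_int c * z ^ k else 0))"
      using i by (auto simp: zv_def scalar_prod_def intro!: sum.cong)
    also have "\<dots> = of_int c * z ^ i" using i by (simp add: sum.delta')
    finally show "(map_mat of_int (c \<cdot>\<^sub>m 1\<^sub>m n) *\<^sub>v zv n z) $ i = (of_int c \<cdot>\<^sub>v zv n z) $ i"
      using i by (simp add: zv_def)
  qed (simp add: zv_def)
  thus ?thesis unfolding Tset_def by (intro CollectI exI[of _ "c \<cdot>\<^sub>m 1\<^sub>m n"]) auto
qed

lemma Tset_add: assumes "x \<in> Tset n z" "y \<in> Tset n z" shows "x + y \<in> Tset n z"
proof -
  obtain M :: "int mat" where M: "M \<in> carrier_mat n n" "map_mat of_int M *\<^sub>v zv n z = x \<cdot>\<^sub>v zv n z"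
    using assms(1) unfolding Tset_def by auto
  obtain N :: "int mat" where N: "N \<in> carrier_mat n n" "map_mat of_int N *\<^sub>v zv n z = y \<cdot>\<^sub>v zv n z"
    using assms(2) unfolding Tset_def by auto
  have v: "zv n z \<in> carrier_vec n" by (simp add: zv_def)
  have "map_mat of_int (M + N) = map_mat (of_int::int\<Rightarrow>complex) M + map_mat of_int N"
    using M N by (intro eq_matI) auto
  hence "map_mat of_int (M + N) *\<^sub>v zv n z = (x + y) \<cdot>\<^sub>v zv n z"
    using M N v by (simp add: add_mult_distrib_mat_vec[of _ n n] add_smult_distrib_vec)
  thus ?thesis using M N unfolding Tset_def by (intro CollectI exI[of _ "M + N"]) auto
qed

lemma Tset_mult: assumes "x \<in> Tset n z" "y \<in> Tset n z" shows "x * y \<in> Tset n z"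
proof -
  obtain M :: "int mat" where M: "M \<in> carrier_mat n n" "map_mat of_int M *\<^sub>v zv n z = x \<cdot>\<^sub>v zv n z"
    using assms(1) unfolding Tset_def by auto
  obtain N :: "int mat" where N: "N \<in> carrier_mat n n" "map_mat of_int N *\<^sub>v zv n z = y \<cdot>\<^sub>v zv n z"
    using assms(2) unfolding Tset_def by auto
  have v: "zv n z \<in> carrier_vec n" by (simp add: zv_def)
  have "map_mat of_int (M * N) = map_mat (of_int::int\<Rightarrow>complex) M * map_mat of_int N"
    by (rule of_int_hom.mat_hom_mult[OF M(1) N(1)])
  hence "map_mat of_int (M * N) *\<^sub>v zv n z = map_mat (of_int::int\<Rightarrow>complex) M *\<^sub>v (y \<cdot>\<^sub>v zv n z)"
    using M N v by (simp add: assoc_mult_mat_vec[of _ n n _ n])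
  also have "\<dots> = y \<cdot>\<^sub>v (x \<cdot>\<^sub>v zv n z)" using M v by (simp add: mult_mat_vec[of _ n n])
  also have "\<dots> = (x * y) \<cdot>\<^sub>v zv n z" by (simp add: smult_smult_assoc mult.commute)
  finally show ?thesis using M N unfolding Tset_def by (intro CollectI exI[of _ "M * N"]) auto
qed

lemma Tset_root: assumes "n > 0" "z ^ n = 1" shows "z \<in> Tset n z"
proof -
  define P :: "int mat" where "P = mat n n (\<lambda>(j,k). if k = Suc j mod n then 1 else 0)"
  have "map_mat of_int P *\<^sub>v zv n z = z \<cdot>\<^sub>v zv n z"
  proof (rule eq_vecI)
    fix j assume j: "j < dim_vec (z \<cdot>\<^sub>v zv n z)"
    hence j: "j < n" by (simp add: zv_def)
    have "(map_mat of_int P *\<^sub>v zv n z) $ j = (\<Sum>k=0..<n. (if k = Suc j mod n then z ^ k else 0))"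
      using j by (auto simp: P_def zv_def scalar_prod_def intro!: sum.cong)
    also have "\<dots> = z ^ (Suc j mod n)"
      using assms(1) by (simp add: sum.delta')
    also have "\<dots> = z ^ Suc j"
    proof (cases "Suc j = n")
      case True thus ?thesis using assms by simp
    next
      case False thus ?thesis using j by simp
    qed
    finally show "(map_mat of_int P *\<^sub>v zv n z) $ j = (z \<cdot>\<^sub>v zv n z) $ j" using j by (simp add: zv_def)
  qed (simp add: P_def zv_def)
  thus ?thesis unfolding Tset_def by (intro CollectI exI[of _ P]) (auto simp: P_def)
qed



lemma cyc_add: assumes "x \<in> cyclotomic_field n" "y \<in> cyclotomic_field n" shows "x + y \<in> cyclotomic_field n"
proof -
  obtain p where p: "x = poly (map_poly of_rat p) (cis (2 * pi / real n))" using assms(1) unfolding cyclotomic_field_def by auto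
  obtain r where r: "y = poly (map_poly of_rat r) (cis (2 * pi / real n))" using assms(2) unfolding cyclotomic_field_def by auto
  have "x + y = poly (map_poly of_rat (p + r)) (cis (2 * pi / real n))" using p r by (simp add: hom_distribs)
  thus ?thesis unfolding cyclotomic_field_def by blast
qed

lemma cyc_mult: assumes "x \<in> cyclotomic_field n" "y \<in> cyclotomic_field n" shows "x * y \<in> cyclotomic_field n"
proof -
  obtain p where p: "x = poly (map_poly of_rat p) (cis (2 * pi / real n))" using assms(1) unfolding cyclotomic_field_def by auto
  obtain r where r: "y = poly (map_poly of_rat r) (cis (2 * pi / real n))" using assms(2) unfolding cyclotomic_field_def by auto
  have "map_poly (of_rat :: rat \<Rightarrow> complex) (p * r) = map_poly of_rat p * map_poly of_rat r"
    by (induct p) (auto simp: hom_distribs)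
  hence "x * y = poly (map_poly of_rat (p * r)) (cis (2 * pi / real n))" using p r by simp
  thus ?thesis unfolding cyclotomic_field_def by blast
qed

lemma cyc_of_int: "of_int c \<in> cyclotomic_field n"
proof -
  have "of_int c = poly (map_poly of_rat [:of_int c:]) (cis (2 * pi / real n))" by (simp add: hom_distribs)
  thus ?thesis unfolding cyclotomic_field_def by blast
qed

lemma cyc_root: "cis (2 * pi / real n) \<in> cyclotomic_field n"
proof -
  have "cis (2 * pi / real n) = poly (map_poly of_rat [:0, 1:]) (cis (2 * pi / real n))" by simp
  thus ?thesis unfolding cyclotomic_field_def by blast
qed

definition Sset :: "nat \<Rightarrow> complex set" where
  "Sset n = {x. x \<in> Tset n (cis (2 * pi / real n)) \<and> x \<in> cyclotomic_field n}"

lemma S_add: "x \<in> Sset n \<Longrightarrow> y \<in> Sset n \<Longrightarrow> x + y \<in> Sset n"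
  unfolding Sset_def by (auto intro: Tset_add cyc_add)
lemma S_mult: "x \<in> Sset n \<Longrightarrow> y \<in> Sset n \<Longrightarrow> x * y \<in> Sset n"
  unfolding Sset_def by (auto intro: Tset_mult cyc_mult)
lemma S_of_int: "of_int c \<in> Sset n"
  unfolding Sset_def by (auto intro: Tset_of_int cyc_of_int)
lemma S_0: "0 \<in> Sset n" using S_of_int[of 0 n] by simp
lemma S_1: "1 \<in> Sset n" using S_of_int[of 1 n] by simp
lemma S_of_nat: "of_nat k \<in> Sset n" using S_of_int[of "int k" n] by simp
lemma S_minus: "x \<in> Sset n \<Longrightarrow> - x \<in> Sset n" using S_mult[OF S_of_int[of "-1" n], of x] by simp
lemma S_diff: "x \<in> Sset n \<Longrightarrow> y \<in> Sset n \<Longrightarrow> x - y \<in> Sset n" using S_add[OF _ S_minus, of x n y] by simp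
lemma S_power: "x \<in> Sset n \<Longrightarrow> x ^ k \<in> Sset n"
  by (induction k) (auto intro: S_mult S_1)
lemma S_sum: "(\<And>i. i \<in> A \<Longrightarrow> f i \<in> Sset n) \<Longrightarrow> sum f A \<in> Sset n"
  by (induction A rule: infinite_finite_induct) (auto intro: S_add S_0)
lemma S_prod: "(\<And>i. i \<in> A \<Longrightarrow> f i \<in> Sset n) \<Longrightarrow> prod f A \<in> Sset n"
  by (induction A rule: infinite_finite_induct) (auto intro: S_mult S_1)
lemma S_alg: "n > 0 \<Longrightarrow> x \<in> Sset n \<Longrightarrow> algebraic_int x"
  unfolding Sset_def by (auto intro: Tset_algebraic_int)

lemma S_unity: assumes n: "n > 0" and z: "z ^ n = 1" shows "z \<in> Sset n"
proof -
  have "z \<in> {z. z ^ n = 1}" using z by simp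
  then obtain k where k: "z = cis (2 * pi * real k / real n)"
    using bij_betw_roots_unity[OF n] unfolding bij_betw_def by auto
  have zr: "cis (2 * pi / real n) ^ n = 1" using n by (simp add: DeMoivre)
  have "cis (2 * pi / real n) \<in> Sset n" unfolding Sset_def
    using Tset_root[OF n zr] cyc_root by auto
  hence "cis (2 * pi / real n) ^ k \<in> Sset n" by (rule S_power)
  also have "cis (2 * pi / real n) ^ k = z" by (simp add: k DeMoivre mult.commute)
  finally show ?thesis .
qed



lemma card_nonzero_pos: "card (UNIV - {0::'a::{finite,field}}) > 0"
proof -
  have "(1::'a) \<in> UNIV - {0}" by simp
  thus ?thesis by (metis card_gt_0_iff empty_iff finite)
qed

lemma card_nonzero: "card (UNIV - {0::'a::{finite,field}}) = card (UNIV :: 'a set) - 1"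
  by (simp add: card_Diff_singleton)

lemma bij_mult_nonzero: "(x::'a::field) \<noteq> 0 \<Longrightarrow> bij_betw ((*) x) (UNIV - {0}) (UNIV - {0})"
  by (rule bij_betwI[where g="\<lambda>y. y / x"]) auto

lemma field_pow_card: assumes x: "(x::'a::{finite,field}) \<noteq> 0"
  shows "x ^ card (UNIV - {0::'a}) = 1"
proof -
  let ?U = "UNIV - {0::'a}"
  have "(\<Prod>y\<in>?U. x * y) = (\<Prod>y\<in>?U. y)"
    using prod.reindex_bij_betw[OF bij_mult_nonzero[OF x], of "\<lambda>y. y"] by simp
  hence "x ^ card ?U * (\<Prod>y\<in>?U. y) = 1 * (\<Prod>y\<in>?U. y)"
    by (simp add: prod.distrib)
  moreover have "(\<Prod>y\<in>?U. y) \<noteq> 0" by simp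
  ultimately show ?thesis by (metis mult_right_cancel)
qed

context
  fixes \<psi> \<omega> :: "'a::{finite,field} \<Rightarrow> complex"
  assumes psi: "additive_char \<psi>" and psin: "\<psi> \<noteq> (\<lambda>_. 1)"
    and om: "mult_char \<omega>"
begin

abbreviation "U \<equiv> UNIV - {0::'a}"
abbreviation "g \<equiv> gauss_sum \<psi> \<omega>"

lemma om_nz: "x \<noteq> 0 \<Longrightarrow> \<omega> x \<noteq> 0" using om unfolding mult_char_def by auto
lemma om_mult: "x \<noteq> 0 \<Longrightarrow> y \<noteq> 0 \<Longrightarrow> \<omega> (x * y) = \<omega> x * \<omega> y" using om unfolding mult_char_def by auto
lemma om_1: "\<omega> 1 = 1"
proof -
  have "\<omega> 1 = \<omega> 1 * \<omega> 1" using om_mult[of 1 1] by simp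
  thus ?thesis using om_nz[of 1] by (metis mult_cancel_left2 one_neq_zero)
qed
lemma om_pow: "x \<noteq> 0 \<Longrightarrow> \<omega> (x ^ k) = \<omega> x ^ k"
  by (induction k) (auto simp: om_1 om_mult)
lemma om_unity: "x \<noteq> 0 \<Longrightarrow> \<omega> x ^ (card (UNIV :: 'a set) - 1) = 1"
  using om_pow[of x "card (UNIV :: 'a set) - 1"] field_pow_card[of x] card_nonzero[where 'a='a] om_1 by simp
lemma nn_pos: "(card (UNIV :: 'a set) - 1) > 0" using card_nonzero_pos[where 'a='a] card_nonzero[where 'a='a] by simp
lemma om_S: "x \<noteq> 0 \<Longrightarrow> \<omega> x \<in> Sset (card (UNIV :: 'a set) - 1)" using S_unity[OF nn_pos om_unity] .
lemma om_inv: "x \<noteq> 0 \<Longrightarrow> inverse (\<omega> x) = \<omega> (inverse x)"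
  using om_mult[of x "inverse x"] om_1 om_nz[of x] by (simp add: field_simps)
lemma om_powi_S: "x \<noteq> 0 \<Longrightarrow> \<omega> x powi a \<in> Sset (card (UNIV :: 'a set) - 1)"
  unfolding power_int_def using om_S om_inv by (auto intro!: S_power)
lemma om_powi_mult: "x \<noteq> 0 \<Longrightarrow> y \<noteq> 0 \<Longrightarrow> \<omega> (x * y) powi a = \<omega> x powi a * \<omega> y powi a"
  by (simp add: om_mult power_int_mult_distrib)
lemma om_powi_add: "x \<noteq> 0 \<Longrightarrow> \<omega> x powi (a + b) = \<omega> x powi a * \<omega> x powi b"
  by (simp add: om_nz power_int_add)

lemma psi_add: "\<psi> (x + y) = \<psi> x * \<psi> y" using psi unfolding additive_char_def by auto
lemma psi_0: "\<psi> 0 = 1"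
proof -
  have "\<psi> 0 = \<psi> 0 * \<psi> 0" using psi_add[of 0 0] by simp
  thus ?thesis using psi unfolding additive_char_def by (metis mult_cancel_left2)
qed
lemma psi_sum: "(\<Sum>x\<in>UNIV. \<psi> x) = 0"
proof -
  obtain y where y: "\<psi> y \<noteq> 1" using psin by auto
  have "(\<Sum>x\<in>UNIV. \<psi> (y + x)) = (\<Sum>x\<in>UNIV. \<psi> x)"
    by (rule sum.reindex_bij_betw) (rule bij_betwI[where g="\<lambda>z. z - y"], auto)
  hence "\<psi> y * (\<Sum>x\<in>UNIV. \<psi> x) = 1 * (\<Sum>x\<in>UNIV. \<psi> x)"
    by (simp add: psi_add sum_distrib_left)
  thus ?thesis using y by (metis mult_right_cancel)
qed
lemma psi_sum_U: "(\<Sum>x\<in>U. \<psi> x) = -1"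
proof -
  have "(\<Sum>x\<in>UNIV. \<psi> x) = \<psi> 0 + (\<Sum>x\<in>U. \<psi> x)" by (rule sum.remove) auto
  thus ?thesis using psi_sum psi_0 by (simp add: add_eq_0_iff)
qed

lemma g_trivial: assumes "\<And>x. x \<noteq> 0 \<Longrightarrow> \<omega> x powi c = 1" shows "g c = -1"
  unfolding gauss_sum_def using assms psi_sum_U by simp


lemma g_pair: "\<exists>K\<in>Sset (card (UNIV :: 'a set) - 1). g a * g b = g (a + b) * K"
proof -
  define c where "c = a + b"
  define I where "I v = (\<Sum>x\<in>U. \<omega> x powi c * \<psi> (x * (1 + v)))" for v
  define T where "T = (\<Sum>x\<in>U. \<omega> x powi c)"
  define J where "J = (\<Sum>v\<in>U - {-1}. \<omega> v powi b * \<omega> (inverse (1 + v)) powi c)"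
  have e1: "g a * g b = (\<Sum>x\<in>U. \<Sum>y\<in>U. (\<omega> x powi a * \<psi> x) * (\<omega> y powi b * \<psi> y))"
    unfolding gauss_sum_def by (rule sum_product)
  also have "\<dots> = (\<Sum>x\<in>U. \<Sum>v\<in>U. \<omega> x powi c * (\<omega> v powi b * \<psi> (x * (1 + v))))"
  proof (rule sum.cong[OF refl])
    fix x assume x: "x \<in> U"
    have "(\<Sum>y\<in>U. (\<omega> x powi a * \<psi> x) * (\<omega> y powi b * \<psi> y))
        = (\<Sum>v\<in>U. (\<omega> x powi a * \<psi> x) * (\<omega> (x * v) powi b * \<psi> (x * v)))"
      using sum.reindex_bij_betw[OF bij_mult_nonzero[of x], of "\<lambda>y. (\<omega> x powi a * \<psi> x) * (\<omega> y powi b * \<psi> y)"] x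
      by simp
    also have "\<dots> = (\<Sum>v\<in>U. \<omega> x powi c * (\<omega> v powi b * \<psi> (x * (1 + v))))"
    proof (rule sum.cong[OF refl])
      fix v assume v: "v \<in> U"
      have "\<psi> (x * (1 + v)) = \<psi> x * \<psi> (x * v)" by (simp add: distrib_left psi_add)
      thus "(\<omega> x powi a * \<psi> x) * (\<omega> (x * v) powi b * \<psi> (x * v)) = \<omega> x powi c * (\<omega> v powi b * \<psi> (x * (1 + v)))"
        using x v by (simp add: c_def om_powi_mult om_powi_add mult_ac)
    qed
    finally show "(\<Sum>y\<in>U. (\<omega> x powi a * \<psi> x) * (\<omega> y powi b * \<psi> y)) = (\<Sum>v\<in>U. \<omega> x powi c * (\<omega> v powi b * \<psi> (x * (1 + v))))" .
  qed
  also have "\<dots> = (\<Sum>v\<in>U. \<omega> v powi b * I v)"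
    unfolding I_def by (subst sum.swap) (simp add: sum_distrib_left mult_ac)
  also have "\<dots> = \<omega> (-1) powi b * I (-1) + (\<Sum>v\<in>U - {-1}. \<omega> v powi b * I v)"
    by (rule sum.remove) auto
  also have "I (-1) = T" unfolding I_def T_def by (simp add: psi_0)
  also have "(\<Sum>v\<in>U - {-1}. \<omega> v powi b * I v) = g c * J"
    unfolding J_def sum_distrib_left
  proof (rule sum.cong[OF refl])
    fix v assume v: "v \<in> U - {-1}"
    define w where "w = inverse (1 + v)"
    have w: "w \<noteq> 0" "w * (1 + v) = 1" using v unfolding w_def by (auto simp: add_eq_0_iff)
    have "I v = (\<Sum>t\<in>U. \<omega> (w * t) powi c * \<psi> (w * t * (1 + v)))"
      unfolding I_def
      using sum.reindex_bij_betw[OF bij_mult_nonzero[OF w(1)], of "\<lambda>x. \<omega> x powi c * \<psi> (x * (1 + v))"]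
      by simp
    also have "\<dots> = (\<Sum>t\<in>U. \<omega> w powi c * (\<omega> t powi c * \<psi> t))"
    proof (rule sum.cong[OF refl])
      fix t assume t: "t \<in> U"
      have h: "w * t * (1 + v) = t" using w(2) by (metis mult.commute mult.left_commute mult_1_right)
      show "\<omega> (w * t) powi c * \<psi> (w * t * (1 + v)) = \<omega> w powi c * (\<omega> t powi c * \<psi> t)"
        using t w by (subst h) (simp add: om_powi_mult)
    qed
    also have "\<dots> = \<omega> w powi c * g c" unfolding gauss_sum_def by (simp add: sum_distrib_left)
    finally show "\<omega> v powi b * I v = g c * (\<omega> v powi b * \<omega> (inverse (1 + v)) powi c)"
      unfolding w_def by (simp add: mult_ac)
  qed
  finally have main: "g a * g b = \<omega> (-1) powi b * T + g c * J" .
  have JS: "J \<in> Sset (card (UNIV :: 'a set) - 1)" unfolding J_def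
    by (intro S_sum S_mult om_powi_S) (auto simp: add_eq_0_iff)
  show ?thesis
  proof (cases "\<forall>x. x \<noteq> 0 \<longrightarrow> \<omega> x powi c = 1")
    case True
    hence gc: "g c = -1" by (intro g_trivial) auto
    have "T = of_nat (card U)" unfolding T_def using True by simp
    hence "g a * g b = g c * (J - \<omega> (-1) powi b * of_nat (card U))" using main gc by (simp add: algebra_simps)
    moreover have "J - \<omega> (-1) powi b * of_nat (card U) \<in> Sset (card (UNIV :: 'a set) - 1)"
      by (intro S_diff JS S_mult om_powi_S S_of_nat) simp
    ultimately show ?thesis unfolding c_def by blast
  next
    case False
    then obtain x0 where x0: "x0 \<noteq> 0" "\<omega> x0 powi c \<noteq> 1" by auto
    have "T = (\<Sum>x\<in>U. \<omega> (x0 * x) powi c)" unfolding T_def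
      using sum.reindex_bij_betw[OF bij_mult_nonzero[OF x0(1)], of "\<lambda>x. \<omega> x powi c"] by simp
    also have "\<dots> = \<omega> x0 powi c * T" unfolding T_def sum_distrib_left
      using x0 by (intro sum.cong) (auto simp: om_powi_mult)
    finally have "(\<omega> x0 powi c - 1) * T = 0" by (simp add: algebra_simps)
    hence "T = 0" using x0 by simp
    hence "g a * g b = g c * J" using main by simp
    thus ?thesis using JS unfolding c_def by blast
  qed
qed


lemma g_0: "g 0 = -1" by (rule g_trivial) simp

lemma g_prod: "\<exists>K\<in>Sset (card (UNIV :: 'a set) - 1). (\<Prod>i<d. g (x i) * g (y i)) = g (\<Sum>i<d. x i + y i) * K" for d :: nat
proof (induction d)
  case 0
  have "(1::complex) = g 0 * of_int (-1)" using g_0 by simp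
  thus ?case using S_of_int[of "-1" "card (UNIV :: 'a set) - 1"] by (intro bexI[of _ "of_int (-1)"]) simp_all
next
  case (Suc d)
  then obtain K where K: "K \<in> Sset (card (UNIV :: 'a set) - 1)" "(\<Prod>i<d. g (x i) * g (y i)) = g (\<Sum>i<d. x i + y i) * K" by blast
  define s where "s = (\<Sum>i<d. x i + y i)"
  obtain K1 where K1: "K1 \<in> Sset (card (UNIV :: 'a set) - 1)" "g s * g (x d) = g (s + x d) * K1" using g_pair by blast
  obtain K2 where K2: "K2 \<in> Sset (card (UNIV :: 'a set) - 1)" "g (s + x d) * g (y d) = g (s + x d + y d) * K2" using g_pair by blast
  have "(\<Prod>i<Suc d. g (x i) * g (y i)) = (g s * g (x d)) * g (y d) * K"
    using K(2) by (simp add: s_def mult_ac)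
  also have "\<dots> = g (s + x d + y d) * (K2 * K1 * K)" using K1(2) K2(2) by (simp add: mult_ac)
  also have "s + x d + y d = (\<Sum>i<Suc d. x i + y i)" by (simp add: s_def)
  finally show ?case using K K1 K2 by (meson S_mult)
qed

end

lemma S_div: "P = G * K \<Longrightarrow> K \<in> Sset n \<Longrightarrow> P / G \<in> Sset n"
  by (cases "G = 0") (auto simp: S_0)

lemma floor_Int: "(r::rat) \<in> \<int> \<Longrightarrow> of_int \<lfloor>r\<rfloor> = r"
  by (metis Ints_cases floor_of_int)



theorem mainTheorem8:
  fixes \<psi> \<omega> :: "'a::{finite,field} \<Rightarrow> complex"
    and d :: nat and \<alpha> \<beta> :: "nat \<Rightarrow> rat" and m :: int
  defines "q \<equiv> card (UNIV :: 'a set)"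
  assumes psi: "additive_char \<psi>" "\<psi> \<noteq> (\<lambda>_. 1)"
    and omega: "char_generator \<omega>"
    and int_alpha: "\<And>i. i < d \<Longrightarrow> of_nat (q - 1) * \<alpha> i \<in> \<int>"
    and int_beta: "\<And>i. i < d \<Longrightarrow> of_nat (q - 1) * \<beta> i \<in> \<int>"
  shows
    "algebraic_int ((\<Prod>i<d. gauss_sum \<psi> \<omega> (m + \<lfloor>\<alpha> i * of_nat (q - 1)\<rfloor>)
                          * gauss_sum \<psi> \<omega> (- m - \<lfloor>\<beta> i * of_nat (q - 1)\<rfloor>))
        / gauss_sum \<psi> \<omega> \<lfloor>(\<Sum>i<d. \<alpha> i - \<beta> i) * of_nat (q - 1)\<rfloor>)
     \<and> (\<Prod>i<d. gauss_sum \<psi> \<omega> (m + \<lfloor>\<alpha> i * of_nat (q - 1)\<rfloor>)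
                          * gauss_sum \<psi> \<omega> (- m - \<lfloor>\<beta> i * of_nat (q - 1)\<rfloor>))
        / gauss_sum \<psi> \<omega> \<lfloor>(\<Sum>i<d. \<alpha> i - \<beta> i) * of_nat (q - 1)\<rfloor>
       \<in> cyclotomic_field (q - 1)
     \<and> algebraic_int ((\<Prod>i<d. gauss_sum \<psi> \<omega> (m + \<lfloor>\<alpha> i * of_nat (q - 1)\<rfloor>)
                          * gauss_sum \<psi> \<omega> (- m - \<lfloor>\<beta> i * of_nat (q - 1)\<rfloor>))
        / (\<Prod>i<d. gauss_sum \<psi> \<omega> \<lfloor>(\<alpha> i - \<beta> i) * of_nat (q - 1)\<rfloor>))
     \<and> (\<Prod>i<d. gauss_sum \<psi> \<omega> (m + \<lfloor>\<alpha> i * of_nat (q - 1)\<rfloor>)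
                          * gauss_sum \<psi> \<omega> (- m - \<lfloor>\<beta> i * of_nat (q - 1)\<rfloor>))
        / (\<Prod>i<d. gauss_sum \<psi> \<omega> \<lfloor>(\<alpha> i - \<beta> i) * of_nat (q - 1)\<rfloor>)
       \<in> cyclotomic_field (q - 1)"
proof -
  have om: "mult_char \<omega>" using omega unfolding char_generator_def by simp
  let ?g = "gauss_sum \<psi> \<omega>"
  let ?S = "Sset (q - 1)"
  define A where "A i = \<lfloor>\<alpha> i * of_nat (q - 1)\<rfloor>" for i
  define B where "B i = \<lfloor>\<beta> i * of_nat (q - 1)\<rfloor>" for i
  define P where "P = (\<Prod>i<d. ?g (m + A i) * ?g (- m - B i))"
  have qpos: "q - 1 > 0" unfolding q_def using nn_pos[OF psi om] .
  have Aeq: "of_int (A i) = \<alpha> i * of_nat (q - 1)" if "i < d" for i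
    unfolding A_def using int_alpha[OF that] by (simp add: floor_Int mult.commute)
  have Beq: "of_int (B i) = \<beta> i * of_nat (q - 1)" if "i < d" for i
    unfolding B_def using int_beta[OF that] by (simp add: floor_Int mult.commute)
  have f1: "\<lfloor>(\<Sum>i<d. \<alpha> i - \<beta> i) * of_nat (q - 1)\<rfloor> = (\<Sum>i<d. (m + A i) + (- m - B i))"
  proof -
    have "(\<Sum>i<d. \<alpha> i - \<beta> i) * of_nat (q - 1) = of_int (\<Sum>i<d. (m + A i) + (- m - B i))"
    proof -
      have "(\<Sum>i<d. \<alpha> i - \<beta> i) * of_nat (q - 1) = (\<Sum>i<d. \<alpha> i * of_nat (q - 1) - \<beta> i * of_nat (q - 1))"
        by (subst sum_distrib_right) (simp add: left_diff_distrib)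
      also have "\<dots> = (\<Sum>i<d. of_int ((m + A i) + (- m - B i)))"
        by (intro sum.cong) (auto simp: Aeq Beq)
      finally show ?thesis by simp
    qed
    thus ?thesis by (metis floor_of_int)
  qed
  have f2: "\<lfloor>(\<alpha> i - \<beta> i) * of_nat (q - 1)\<rfloor> = (m + A i) + (- m - B i)" if "i < d" for i
  proof -
    have "(\<alpha> i - \<beta> i) * of_nat (q - 1) = of_int ((m + A i) + (- m - B i))"
      using that by (simp add: Aeq Beq algebra_simps)
    thus ?thesis by simp
  qed
  have c1: "P / ?g \<lfloor>(\<Sum>i<d. \<alpha> i - \<beta> i) * of_nat (q - 1)\<rfloor> \<in> ?S"
  proof -
    obtain K where K: "K \<in> ?S" "P = ?g (\<Sum>i<d. (m + A i) + (- m - B i)) * K"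
      using g_prod[OF psi om, of "\<lambda>i. m + A i" "\<lambda>i. - m - B i" d] unfolding P_def q_def by blast
    show ?thesis unfolding f1 by (rule S_div[OF K(2) K(1)])
  qed
  have "\<forall>i\<in>{..<d}. \<exists>K. K \<in> ?S \<and> ?g (m + A i) * ?g (- m - B i) = ?g \<lfloor>(\<alpha> i - \<beta> i) * of_nat (q - 1)\<rfloor> * K"
  proof
    fix i assume i: "i \<in> {..<d}"
    show "\<exists>K. K \<in> ?S \<and> ?g (m + A i) * ?g (- m - B i) = ?g \<lfloor>(\<alpha> i - \<beta> i) * of_nat (q - 1)\<rfloor> * K"
      using g_pair[OF psi om, of "m + A i" "- m - B i"] f2[of i] i unfolding q_def by auto
  qed
  then obtain Kf where Kf: "\<forall>i\<in>{..<d}. Kf i \<in> ?S \<and> ?g (m + A i) * ?g (- m - B i) = ?g \<lfloor>(\<alpha> i - \<beta> i) * of_nat (q - 1)\<rfloor> * Kf i"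
    by (rule bchoice[THEN exE]) blast
  have "P = (\<Prod>i<d. ?g \<lfloor>(\<alpha> i - \<beta> i) * of_nat (q - 1)\<rfloor>) * (\<Prod>i<d. Kf i)"
    unfolding P_def prod.distrib[symmetric] using Kf by (intro prod.cong) auto
  moreover have "(\<Prod>i<d. Kf i) \<in> ?S" using Kf by (intro S_prod) auto
  ultimately have c2: "P / (\<Prod>i<d. ?g \<lfloor>(\<alpha> i - \<beta> i) * of_nat (q - 1)\<rfloor>) \<in> ?S" by (rule S_div)
  have SS: "algebraic_int x \<and> x \<in> cyclotomic_field (q - 1)" if "x \<in> ?S" for x
    using S_alg[OF qpos that] that unfolding Sset_def by simp
  note r1 = SS[OF c1, unfolded P_def A_def B_def]
  note r2 = SS[OF c2, unfolded P_def A_def B_def]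
  show ?thesis using r1 r2 by (intro conjI) (erule conjE, assumption)+
qed


end
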